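(* Let $m\geq 3$ and $n\geq 2$ be integers, let $K_m$ be the complete graph of order $m$ and $H_n$ a graph of order $n$. Then $rvc(K_m\diamond H_n)=\lceil m/3\rceil$.
   Context: All graphs are finite, simple, connected and undirected. A rainbow vertex $k$-coloring of $G$ is a map $c:V(G)\to\{1,\dots,k\}$ such that every two vertices are joined by a path whose internal vertices all receive distinct colors; $rvc(G)$ is the least $k$ for which $G$ has one. For graphs $G_m$ (order $m$) and $H_n$ (order $n$) on disjoint vertex sets, the edge corona $G_m\diamond H_n$ is obtained from one copy of $G_m$ and $|E(G_m)|$ vertex-disjoint copies of $H_n$, one per edge of $G_m$, by joining both end vertices of the $j$-th edge of $G_m$ to every vertex of the $j$-th copy of $H_n$. *)

theory Defs
  imports Complex_Main
begin

definition simple_graph :: "'v set \<Rightarrow> 'v set set \<Rightarrow> bool" where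
  "simple_graph V E \<longleftrightarrow> finite V \<and> (\<forall>e\<in>E. \<exists>x y. e = {x, y} \<and> x \<noteq> y \<and> x \<in> V \<and> y \<in> V)"

definition is_path :: "'v set \<Rightarrow> 'v set set \<Rightarrow> 'v list \<Rightarrow> 'v \<Rightarrow> 'v \<Rightarrow> bool" where
  "is_path V E xs u v \<longleftrightarrow> xs \<noteq> [] \<and> hd xs = u \<and> last xs = v \<and> set xs \<subseteq> V \<and> distinct xs \<and>
     (\<forall>i < length xs - 1. {xs ! i, xs ! Suc i} \<in> E)"

definition connected_graph :: "'v set \<Rightarrow> 'v set set \<Rightarrow> bool" where
  "connected_graph V E \<longleftrightarrow> (\<forall>u\<in>V. \<forall>v\<in>V. \<exists>xs. is_path V E xs u v)"

definition internal :: "'v list \<Rightarrow> 'v list" where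
  "internal xs = butlast (tl xs)"

definition rainbow_vertex_coloring :: "'v set \<Rightarrow> 'v set set \<Rightarrow> nat \<Rightarrow> ('v \<Rightarrow> nat) \<Rightarrow> bool" where
  "rainbow_vertex_coloring V E k c \<longleftrightarrow> c ` V \<subseteq> {1..k} \<and>
     (\<forall>u\<in>V. \<forall>v\<in>V. \<exists>xs. is_path V E xs u v \<and> distinct (map c (internal xs)))"

definition rvc :: "'v set \<Rightarrow> 'v set set \<Rightarrow> nat" where
  "rvc V E = (LEAST k. \<exists>c. rainbow_vertex_coloring V E k c)"

definition complete_edges :: "'v set \<Rightarrow> 'v set set" where
  "complete_edges V = {{x, y} | x y. x \<in> V \<and> y \<in> V \<and> x \<noteq> y}"

text \<open>Edge corona of (V,E) and (W,F): G-vertices are Inl x; the copy of w in the copy of H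
  attached to edge e is Inr (e, w).\<close>
definition ec_verts :: "'a set \<Rightarrow> 'a set set \<Rightarrow> 'b set \<Rightarrow> ('a + ('a set \<times> 'b)) set" where
  "ec_verts V E W = Inl ` V \<union> {Inr (e, w) | e w. e \<in> E \<and> w \<in> W}"

definition ec_edges :: "'a set \<Rightarrow> 'a set set \<Rightarrow> 'b set \<Rightarrow> 'b set set \<Rightarrow> ('a + ('a set \<times> 'b)) set set" where
  "ec_edges V E W F =
     (\<lambda>e. Inl ` e) ` E
     \<union> {(\<lambda>w. Inr (e, w)) ` f | e f. e \<in> E \<and> f \<in> F}
     \<union> {{Inl x, Inr (e, w)} | x e w. e \<in> E \<and> x \<in> e \<and> w \<in> W}"

end

theory Submission imports Defs begin

lemma ceil_eq: "nat \<lceil>real m / 3\<rceil> = (m + 2) div 3"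
proof -
  have "\<lceil>real m / 3\<rceil> = \<lceil>(of_int (int m) :: real) / of_int 3\<rceil>" by simp
  also have "\<dots> = - (- int m div 3)" by (rule ceiling_divide_eq_div)
  finally show ?thesis by linarith
qed

lemma four_elems:
  assumes "finite A" "card A \<ge> 4"
  shows "\<exists>a b c d. a \<in> A \<and> b \<in> A \<and> c \<in> A \<and> d \<in> A \<and> a \<noteq> b \<and> a \<noteq> c \<and> a \<noteq> d \<and> b \<noteq> c \<and> b \<noteq> d \<and> c \<noteq> d"
proof -
  obtain a where a: "a \<in> A" using assms by fastforce
  have "card (A - {a}) = card A - 1" using a assms by simp
  then have "3 \<le> card (A - {a})" using assms by linarith
  then obtain B where B: "B \<subseteq> A - {a}" "card B = 3" using obtain_subset_with_card_n by metis
  then obtain x y z where "B = {x,y,z}" "x \<noteq> y" "y \<noteq> z" "x \<noteq> z" by (auto simp: card_3_iff)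
  then show ?thesis using B a by blast
qed

lemma exit_lemma: "xs \<noteq> [] \<Longrightarrow> hd xs \<in> S \<Longrightarrow> last xs \<notin> S \<Longrightarrow> \<exists>i. Suc i < length xs \<and> xs!i \<in> S \<and> xs!Suc i \<notin> S"
proof (induction xs)
  case Nil then show ?case by simp
next
  case (Cons a xs)
  show ?case
  proof (cases "xs = []")
    case True then show ?thesis using Cons by simp
  next
    case False
    show ?thesis
    proof (cases "hd xs \<in> S")
      case True
      then obtain i where "Suc i < length xs \<and> xs!i \<in> S \<and> xs!Suc i \<notin> S" using Cons False by auto
      then show ?thesis by (intro exI[of _ "Suc i"]) auto
    next
      case f: False
      then show ?thesis using Cons False by (intro exI[of _ 0]) (auto simp: hd_conv_nth)
    qed
  qed
qed

lemma edge_LL: "x \<in> V \<Longrightarrow> y \<in> V \<Longrightarrow> x \<noteq> y \<Longrightarrow> {Inl x, Inl y} \<in> ec_edges V (complete_edges V) W F"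
proof -
  assume a: "x \<in> V" "y \<in> V" "x \<noteq> y"
  have "{x, y} \<in> complete_edges V" unfolding complete_edges_def using a by blast
  moreover have "{Inl x, Inl y} = Inl ` {x, y}" by simp
  ultimately show ?thesis unfolding ec_edges_def by blast
qed

lemma edge_LR: "e \<in> E \<Longrightarrow> x \<in> e \<Longrightarrow> w \<in> W \<Longrightarrow> {Inl x, Inr (e, w)} \<in> ec_edges V E W F"
  unfolding ec_edges_def by blast

lemma edge_RX: "{Inr (e, w0), v} \<in> ec_edges V E W F \<Longrightarrow> v \<notin> range (\<lambda>w. Inr (e, w)) \<Longrightarrow> \<exists>x\<in>e. v = Inl x"
proof -
  assume a: "{Inr (e, w0), v} \<in> ec_edges V E W F" "v \<notin> range (\<lambda>w. Inr (e, w))"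
  show ?thesis
  proof (cases "{Inr (e, w0), v} \<in> {(\<lambda>w. Inr (e, w)) ` f | e f. e \<in> E \<and> f \<in> F}")
    case True
    then obtain e' f where ef: "{Inr (e, w0), v} = (\<lambda>w. Inr (e', w)) ` f" by blast
    then have "Inr (e, w0) \<in> (\<lambda>w. Inr (e', w)) ` f" "v \<in> (\<lambda>w. Inr (e', w)) ` f" by blast+
    then have "e' = e" "v \<in> range (\<lambda>w. Inr (e', w))" by auto
    then show ?thesis using a by simp
  next
    case False
    then show ?thesis using a unfolding ec_edges_def by (auto simp: doubleton_eq_iff)
  qed
qed

lemma internal_nth: "0 < j \<Longrightarrow> Suc j < length xs \<Longrightarrow> xs ! j \<in> set (internal xs)"
proof -
  assume a: "0 < j" "Suc j < length xs"
  have "internal xs ! (j - 1) = xs ! j" unfolding internal_def using a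
    by (simp add: nth_butlast nth_tl)
  moreover have "j - 1 < length (internal xs)" unfolding internal_def using a by simp
  ultimately show ?thesis by (metis nth_mem)
qed


lemma path1: "a \<in> V \<Longrightarrow> is_path V E [a] a a"
  unfolding is_path_def by simp

lemma path2: "a \<in> V \<Longrightarrow> b \<in> V \<Longrightarrow> a \<noteq> b \<Longrightarrow> {a,b} \<in> E \<Longrightarrow> is_path V E [a,b] a b"
  unfolding is_path_def by simp

lemma path3: "a \<in> V \<Longrightarrow> b \<in> V \<Longrightarrow> c \<in> V \<Longrightarrow> distinct [a,b,c] \<Longrightarrow> {a,b} \<in> E \<Longrightarrow> {b,c} \<in> E
  \<Longrightarrow> is_path V E [a,b,c] a c"
  unfolding is_path_def by (auto simp: less_Suc_eq numeral_2_eq_2)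

lemma path4: "a \<in> V \<Longrightarrow> b \<in> V \<Longrightarrow> c \<in> V \<Longrightarrow> d \<in> V \<Longrightarrow> distinct [a,b,c,d] \<Longrightarrow> {a,b} \<in> E \<Longrightarrow> {b,c} \<in> E
  \<Longrightarrow> {c,d} \<in> E \<Longrightarrow> is_path V E [a,b,c,d] a d"
  unfolding is_path_def by (auto simp: less_Suc_eq numeral_3_eq_3)

lemma four_div3: "(a::nat) div 3 = d \<Longrightarrow> b div 3 = d \<Longrightarrow> c div 3 = d \<Longrightarrow> e div 3 = d
  \<Longrightarrow> distinct [a,b,c,e] \<Longrightarrow> False"
  by auto

lemma ce_cases: "e \<in> complete_edges V \<Longrightarrow> \<exists>a b. e = {a,b} \<and> a \<noteq> b \<and> a \<in> V \<and> b \<in> V"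
  unfolding complete_edges_def by blast

lemma verts_cases: "u \<in> ec_verts V E W \<Longrightarrow> (\<exists>x\<in>V. u = Inl x) \<or> (\<exists>e w. u = Inr (e, w) \<and> e \<in> E \<and> w \<in> W)"
  unfolding ec_verts_def by blast

lemma vertL: "x \<in> V \<Longrightarrow> Inl x \<in> ec_verts V E W"
  unfolding ec_verts_def by blast

lemma vertR: "e \<in> E \<Longrightarrow> w \<in> W \<Longrightarrow> Inr (e, w) \<in> ec_verts V E W"
  unfolding ec_verts_def by blast

lemma internal_rev: "internal (rev xs) = rev (internal xs)"
  unfolding internal_def by (induction xs) (auto simp: butlast_append tl_append split: list.splits)

lemma path_rev: "is_path V E xs u v \<Longrightarrow> is_path V E (rev xs) v u"
proof -
  assume p: "is_path V E xs u v"
  have "{rev xs ! i, rev xs ! Suc i} \<in> E" if i: "i < length xs - 1" for i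
  proof -
    let ?j = "length xs - Suc (Suc i)"
    have "?j < length xs - 1" using i by auto
    then have "{xs ! ?j, xs ! Suc ?j} \<in> E" using p unfolding is_path_def by blast
    moreover have "rev xs ! i = xs ! Suc ?j" "rev xs ! Suc i = xs ! ?j" using i
      by (auto simp: rev_nth Suc_diff_Suc)
    ultimately show ?thesis by (simp add: insert_commute)
  qed
  then show ?thesis using p unfolding is_path_def by (auto simp: hd_rev last_rev)
qed

lemma upper:
  assumes fV: "finite V" and cV: "card V = m" and m3: "m \<ge> 3"
  shows "\<exists>c. rainbow_vertex_coloring (ec_verts V (complete_edges V) W) (ec_edges V (complete_edges V) W F) ((m + 2) div 3) c"
proof -
  let ?E = "complete_edges V"
  let ?VV = "ec_verts V ?E W"
  let ?EE = "ec_edges V ?E W F"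
  have vL: "\<And>x. x \<in> V \<Longrightarrow> Inl x \<in> ?VV" by (rule vertL)
  have vR: "\<And>e w. e \<in> ?E \<Longrightarrow> w \<in> W \<Longrightarrow> Inr (e, w) \<in> ?VV" by (rule vertR)
  have eLL: "\<And>x y. x \<in> V \<Longrightarrow> y \<in> V \<Longrightarrow> x \<noteq> y \<Longrightarrow> {Inl x, Inl y} \<in> ?EE" by (rule edge_LL)
  have eLR: "\<And>e x w. e \<in> ?E \<Longrightarrow> x \<in> e \<Longrightarrow> w \<in> W \<Longrightarrow> {Inl x, Inr (e, w)} \<in> ?EE" by (rule edge_LR)
  obtain f where f: "bij_betw f V {0..<m}" using ex_bij_betw_finite_nat[OF fV] cV by blast
  have finj: "inj_on f V" and frng: "\<And>x. x \<in> V \<Longrightarrow> f x < m"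
    using f by (auto simp: bij_betw_def)
  define c where "c v = (case v of Inl x \<Rightarrow> f x div 3 + 1 | Inr _ \<Rightarrow> 1)" for v :: "'a + ('a set \<times> 'b)"
  have cL: "c (Inl x) = f x div 3 + 1" for x unfolding c_def by simp
  have cR: "c (Inr p) = 1" for p unfolding c_def by simp
  have range: "c ` ?VV \<subseteq> {1..(m + 2) div 3}"
  proof
    fix y assume "y \<in> c ` ?VV"
    then obtain u where u: "u \<in> ?VV" "y = c u" by blast
    from verts_cases[OF u(1)] show "y \<in> {1..(m + 2) div 3}"
    proof
      assume "\<exists>x\<in>V. u = Inl x"
      then obtain x where "x \<in> V" "u = Inl x" by blast
      then have "f x < m" "y = f x div 3 + 1" using frng u cL by auto
      then show ?thesis by auto
    next
      assume "\<exists>e w. u = Inr (e, w) \<and> e \<in> ?E \<and> w \<in> W"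
      then show ?thesis using u cR m3 by auto
    qed
  qed
  have LR: "\<exists>xs. is_path ?VV ?EE xs (Inl x) (Inr (e, w)) \<and> distinct (map c (internal xs))"
    if x: "x \<in> V" and e: "e \<in> ?E" and w: "w \<in> W" for x e w
  proof (cases "x \<in> e")
    case True
    then show ?thesis using path2[of "Inl x" ?VV "Inr (e, w)" ?EE] eLR[OF e True w] vL[OF x] vR[OF e w]
      by (intro exI[of _ "[Inl x, Inr (e, w)]"]) (auto simp: internal_def)
  next
    case False
    obtain a b where ab: "e = {a,b}" "a \<noteq> b" "a \<in> V" "b \<in> V" using ce_cases[OF e] by blast
    have "a \<noteq> x" using False ab by auto
    have "is_path ?VV ?EE [Inl x, Inl a, Inr (e, w)] (Inl x) (Inr (e, w))"
      apply (rule path3)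
      using vL[OF x] vL[OF ab(3)] vR[OF e w] \<open>a \<noteq> x\<close> eLL[OF x ab(3)] eLR[OF e _ w, of a] ab
      by auto
    then show ?thesis by (intro exI[of _ "[Inl x, Inl a, Inr (e, w)]"]) (auto simp: internal_def)
  qed
  have RR: "\<exists>xs. is_path ?VV ?EE xs (Inr (e, w)) (Inr (e', w')) \<and> distinct (map c (internal xs))"
    if e: "e \<in> ?E" and w: "w \<in> W" and e': "e' \<in> ?E" and w': "w' \<in> W" and ne: "Inr (e, w) \<noteq> (Inr (e', w') :: 'a + ('a set \<times> 'b))" for e w e' w'
  proof (cases "e \<inter> e' = {}")
    case False
    then obtain x where x: "x \<in> e" "x \<in> e'" by blast
    have xV: "x \<in> V" using x ce_cases[OF e] by auto
    have "is_path ?VV ?EE [Inr (e, w), Inl x, Inr (e', w')] (Inr (e, w)) (Inr (e', w'))"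
      apply (rule path3)
      using vL[OF xV] vR[OF e w] vR[OF e' w'] ne eLR[OF e x(1) w] eLR[OF e' x(2) w']
      by (auto simp: insert_commute)
    then show ?thesis by (intro exI[of _ "[Inr (e, w), Inl x, Inr (e', w')]"]) (auto simp: internal_def)
  next
    case True
    obtain a b where ab: "e = {a,b}" "a \<noteq> b" "a \<in> V" "b \<in> V" using ce_cases[OF e] by blast
    obtain p q where pq: "e' = {p,q}" "p \<noteq> q" "p \<in> V" "q \<in> V" using ce_cases[OF e'] by blast
    have dist: "distinct [a,b,p,q]" using True ab pq by auto
    have "\<exists>a'\<in>e. \<exists>p'\<in>e'. f a' div 3 \<noteq> f p' div 3"
    proof (rule ccontr)
      assume "\<not> ?thesis"
      then have "f b div 3 = f a div 3" "f p div 3 = f a div 3" "f q div 3 = f a div 3" using ab pq by auto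
      moreover have "distinct [f a, f b, f p, f q]" using dist finj ab pq by (auto simp: inj_on_eq_iff)
      ultimately show False using four_div3 by metis
    qed
    then obtain a' p' where ap: "a' \<in> e" "p' \<in> e'" "f a' div 3 \<noteq> f p' div 3" by blast
    have a'V: "a' \<in> V" and p'V: "p' \<in> V" using ap ab pq by auto
    have "a' \<noteq> p'" using ap by auto
    have "is_path ?VV ?EE [Inr (e, w), Inl a', Inl p', Inr (e', w')] (Inr (e, w)) (Inr (e', w'))"
      apply (rule path4)
      using vL[OF a'V] vL[OF p'V] vR[OF e w] vR[OF e' w'] ne \<open>a' \<noteq> p'\<close>
        eLR[OF e ap(1) w] eLR[OF e' ap(2) w'] eLL[OF a'V p'V \<open>a' \<noteq> p'\<close>]
      by (auto simp: insert_commute)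
    moreover have "distinct (map c (internal [Inr (e, w), Inl a', Inl p', Inr (e', w')]))"
      using ap(3) by (simp add: internal_def cL)
    ultimately show ?thesis by blast
  qed
  have all: "\<exists>xs. is_path ?VV ?EE xs u v \<and> distinct (map c (internal xs))"
    if u: "u \<in> ?VV" and v: "v \<in> ?VV" for u v
  proof (cases "u = v")
    case True
    then show ?thesis using path1[OF u, of ?EE] by (intro exI[of _ "[u]"]) (auto simp: internal_def)
  next
    case ne: False
    show ?thesis
    proof (cases "\<exists>x\<in>V. u = Inl x")
      case uL: True
      then obtain x where x: "x \<in> V" "u = Inl x" by blast
      show ?thesis
      proof (cases "\<exists>y\<in>V. v = Inl y")
        case True
        then obtain y where y: "y \<in> V" "v = Inl y" by blast
        then show ?thesis using x ne path2[OF vL[OF x(1)] vL[OF y(1)] _ eLL[OF x(1) y(1)]]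
          by (intro exI[of _ "[u, v]"]) (auto simp: internal_def)
      next
        case False
        then obtain e w where "v = Inr (e, w)" "e \<in> ?E" "w \<in> W" using verts_cases[OF v] by blast
        then show ?thesis using LR x by blast
      qed
    next
      case False
      then obtain e w where ew: "u = Inr (e, w)" "e \<in> ?E" "w \<in> W" using verts_cases[OF u] by blast
      show ?thesis
      proof (cases "\<exists>y\<in>V. v = Inl y")
        case True
        then obtain y where y: "y \<in> V" "v = Inl y" by blast
        obtain xs where "is_path ?VV ?EE xs v u" "distinct (map c (internal xs))" using LR[OF y(1) ew(2,3)] y ew by blast
        then show ?thesis
          by (intro exI[of _ "rev xs"]) (simp add: path_rev internal_rev rev_map[symmetric])
      next
        case False
        then obtain e' w' where "v = Inr (e', w')" "e' \<in> ?E" "w' \<in> W" using verts_cases[OF v] by blast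
        then show ?thesis using RR ew ne by blast
      qed
    qed
  qed
  show ?thesis unfolding rainbow_vertex_coloring_def using range all by blast
qed

lemma lower:
  assumes fV: "finite V" and cV: "card V = m" and wW: "w \<in> W"
    and rc: "rainbow_vertex_coloring (ec_verts V (complete_edges V) W) (ec_edges V (complete_edges V) W F) k c"
  shows "m \<le> 3 * k"
proof (rule ccontr)
  assume "\<not> m \<le> 3 * k"
  then have big: "3 * k < card V" using cV by simp
  let ?E = "complete_edges V"
  let ?VV = "ec_verts V ?E W"
  let ?EE = "ec_edges V ?E W F"
  let ?A = "\<lambda>j. {x \<in> V. c (Inl x) = j}"
  have rng: "c ` ?VV \<subseteq> {1..k}" and conn: "\<forall>u\<in>?VV. \<forall>v\<in>?VV. \<exists>xs. is_path ?VV ?EE xs u v \<and> distinct (map c (internal xs))"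
    using rc unfolding rainbow_vertex_coloring_def by auto
  have "V \<subseteq> (\<Union>j\<in>{1..k}. ?A j)"
  proof
    fix x assume "x \<in> V"
    then have "c (Inl x) \<in> {1..k}" using rng vertL[of x V ?E W] by blast
    then show "x \<in> (\<Union>j\<in>{1..k}. ?A j)" using \<open>x \<in> V\<close> by blast
  qed
  have "\<exists>j\<in>{1..k}. 4 \<le> card (?A j)"
  proof (rule ccontr)
    assume "\<not> ?thesis"
    then have le: "\<And>j. j \<in> {1..k} \<Longrightarrow> card (?A j) \<le> 3" by force
    have "card V \<le> card (\<Union>j\<in>{1..k}. ?A j)"
      using \<open>V \<subseteq> _\<close> fV by (intro card_mono) auto
    also have "\<dots> \<le> (\<Sum>j\<in>{1..k}. card (?A j))" by (rule card_UN_le) simp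
    also have "\<dots> \<le> (\<Sum>j\<in>{1..k}. 3)" using le by (intro sum_mono) auto
    also have "\<dots> = 3 * k" by simp
    finally show False using big by simp
  qed
  then obtain j where "4 \<le> card (?A j)" by blast
  moreover have "finite (?A j)" using fV by simp
  ultimately obtain a b p q where abpq: "a \<in> ?A j" "b \<in> ?A j" "p \<in> ?A j" "q \<in> ?A j"
    "a \<noteq> b" "a \<noteq> p" "a \<noteq> q" "b \<noteq> p" "b \<noteq> q" "p \<noteq> q"
    using four_elems by blast
  have e1: "{a,b} \<in> ?E" and e2: "{p,q} \<in> ?E" using abpq unfolding complete_edges_def by blast+
  have u: "Inr ({a,b}, w) \<in> ?VV" and v: "Inr ({p,q}, w) \<in> ?VV" using vertR[OF e1 wW] vertR[OF e2 wW] by blast+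
  obtain xs where p: "is_path ?VV ?EE xs (Inr ({a,b}, w)) (Inr ({p,q}, w))" and d: "distinct (map c (internal xs))"
    using conn u v by blast
  have ne: "xs \<noteq> []" and hd: "hd xs = Inr ({a,b}, w)" and lst: "last xs = Inr ({p,q}, w)"
    and edges: "\<And>i. i < length xs - 1 \<Longrightarrow> {xs ! i, xs ! Suc i} \<in> ?EE"
    using p unfolding is_path_def by auto
  have hd0: "xs ! 0 = Inr ({a,b}, w)" using hd ne by (simp add: hd_conv_nth)
  have lstn: "xs ! (length xs - 1) = Inr ({p,q}, w)" using lst ne by (simp add: last_conv_nth)
  have neq: "{a,b} \<noteq> {p,q}" using abpq by (auto simp: doubleton_eq_iff)
  let ?S = "range (\<lambda>w'. Inr ({a,b}, w')) :: ('a + ('a set \<times> 'b)) set"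
  let ?T = "range (\<lambda>w'. Inr ({p,q}, w')) :: ('a + ('a set \<times> 'b)) set"
  obtain i where i: "Suc i < length xs" "xs ! i \<in> ?S" "xs ! Suc i \<notin> ?S"
    using exit_lemma[OF ne, of ?S] hd lst neq by auto
  then obtain w1 where w1: "xs ! i = Inr ({a,b}, w1)" by blast
  have ed1: "{Inr ({a,b}, w1), xs ! Suc i} \<in> ?EE" using edges[of i] i w1 by simp
  obtain x where x: "x \<in> {a,b}" "xs ! Suc i = Inl x" using edge_RX[OF ed1 i(3)] by blast
  have "Suc i \<noteq> length xs - 1" using x lstn by auto
  then have xin: "Inl x \<in> set (internal xs)" using internal_nth[of "Suc i" xs] i x by auto
  obtain jj where j: "Suc jj < length xs" "xs ! jj \<in> - ?T" "xs ! Suc jj \<notin> - ?T"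
    using exit_lemma[OF ne, of "- ?T"] hd lst neq by auto
  then obtain w2 where w2: "xs ! Suc jj = Inr ({p,q}, w2)" by blast
  have ed2: "{Inr ({p,q}, w2), xs ! jj} \<in> ?EE" using edges[of jj] j w2 by (simp add: insert_commute)
  have nT: "xs ! jj \<notin> ?T" using j(2) by simp
  obtain y where y: "y \<in> {p,q}" "xs ! jj = Inl y" using edge_RX[OF ed2 nT] by blast
  have "jj \<noteq> 0" using y(2) hd0 by (metis sum.distinct(1))
  then have yin: "Inl y \<in> set (internal xs)" using internal_nth[of jj xs] j y by auto
  have "x \<noteq> y" using x y abpq by auto
  moreover have "c (Inl x) = c (Inl y)" using x y abpq by auto
  ultimately show False using d xin yin unfolding distinct_map inj_on_def by blast
qed

theorem theorem8:
  fixes V :: "'a set" and W :: "'b set" and F :: "'b set set" and m n :: nat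
  assumes "finite V" and "card V = m" and "m \<ge> 3"
    and "simple_graph W F" and "connected_graph W F" and "card W = n" and "n \<ge> 2"
  shows "rvc (ec_verts V (complete_edges V) W) (ec_edges V (complete_edges V) W F)
           = nat \<lceil>real m / 3\<rceil>"
proof -
  have "W \<noteq> {}" using assms(6,7) by auto
  then obtain w where w: "w \<in> W" by blast
  have "rvc (ec_verts V (complete_edges V) W) (ec_edges V (complete_edges V) W F) = (m + 2) div 3"
    unfolding rvc_def
  proof (rule Least_equality)
    show "\<exists>c. rainbow_vertex_coloring (ec_verts V (complete_edges V) W) (ec_edges V (complete_edges V) W F) ((m + 2) div 3) c"
      by (rule upper[OF assms(1,2,3)])
  next
    fix k assume "\<exists>c. rainbow_vertex_coloring (ec_verts V (complete_edges V) W) (ec_edges V (complete_edges V) W F) k c"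
    then obtain c where "rainbow_vertex_coloring (ec_verts V (complete_edges V) W) (ec_edges V (complete_edges V) W F) k c" by blast
    then have "m \<le> 3 * k" using lower[OF assms(1,2) w] by blast
    then show "(m + 2) div 3 \<le> k" by linarith
  qed
  then show ?thesis using ceil_eq by simp
qed

end
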